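(* Let $I$ be a nonempty open real interval, let $\varphi:I\to\mathbb{R}$ be a strictly monotone function, let $f:I\to\mathbb{R}$ be a function that is not identically zero, and let $t\in\,]0,1[\,$. Then the following assertions are equivalent: (i) $(\varphi,f)$ satisfies \[ \big(tf(x)+(1-t)f(y)\big)\varphi(tx+(1-t)y)=tf(x)\varphi(x)+(1-t)f(y)\varphi(y) \qquad\text{for all } x,y\in I; \] (ii) $f$ is nowhere zero on $I$, $f$ and $\varphi$ are twice differentiable on $I$ with $2f'\varphi'+f\varphi''=0$ on $I$, and there exists $p\in\mathbb{R}$ with $(t-\frac12)p=0$ such that $f''=pf$ on $I$; (iii) $f$ is nowhere zero on $I$ and there exists $p\in\mathbb{R}$ with $(t-\frac12)p=0$ such that $(f,f\cdot\varphi)\sim(S_p,C_p)$ on $I$.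
   Context: For $p\in\mathbb{R}$, the functions $S_p,C_p:\mathbb{R}\to\mathbb{R}$ are defined by $S_p(x)=\sin(\sqrt{-p}\,x)$, $C_p(x)=\cos(\sqrt{-p}\,x)$ if $p<0$; $S_p(x)=x$, $C_p(x)=1$ if $p=0$; $S_p(x)=\sinh(\sqrt{p}\,x)$, $C_p(x)=\cosh(\sqrt{p}\,x)$ if $p>0$. Two pairs of functions $(f,g):I\to\mathbb{R}^2$ and $(h,k):I\to\mathbb{R}^2$ are called equivalent, written $(f,g)\sim(h,k)$, if there exist constants $a,b,c,d\in\mathbb{R}$ with $ad\neq cb$ such that $h=af+bg$ and $k=cf+dg$ on $I$. *)

theory Defs
  imports "HOL-Analysis.Analysis"
begin

definition S_fun :: "real \<Rightarrow> real \<Rightarrow> real" where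
  "S_fun p x = (if p < 0 then sin (sqrt (- p) * x) else if p = 0 then x else sinh (sqrt p * x))"

definition C_fun :: "real \<Rightarrow> real \<Rightarrow> real" where
  "C_fun p x = (if p < 0 then cos (sqrt (- p) * x) else if p = 0 then 1 else cosh (sqrt p * x))"

definition pair_equiv_on ::
  "real set \<Rightarrow> (real \<Rightarrow> real) \<Rightarrow> (real \<Rightarrow> real) \<Rightarrow> (real \<Rightarrow> real) \<Rightarrow> (real \<Rightarrow> real) \<Rightarrow> bool" where
  "pair_equiv_on I f g h k \<longleftrightarrow>
     (\<exists>a b c d. a * d \<noteq> c * b \<and>
        (\<forall>x\<in>I. h x = a * f x + b * g x \<and> k x = c * f x + d * g x))"

end

theory Submission
  imports Defs
begin

lemma real_diff_iff_fd: "(u::real\<Rightarrow>real) differentiable (at x) \<longleftrightarrow> u field_differentiable (at x)"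
  by (simp add: real_differentiable_def field_differentiable_def)

definition D1 :: "(real \<Rightarrow> real) \<Rightarrow> real set \<Rightarrow> bool" where
  "D1 u S \<longleftrightarrow> (\<forall>x\<in>S. u differentiable (at x))"

definition T2 :: "(real \<Rightarrow> real) \<Rightarrow> real set \<Rightarrow> bool" where
  "T2 u S \<longleftrightarrow> D1 u S \<and> D1 (deriv u) S"

lemma D1_const: "D1 (\<lambda>x. c) S" by (simp add: D1_def)
lemma D1_id: "D1 (\<lambda>x. x) S" by (simp add: D1_def)
lemma D1_add: "D1 u S \<Longrightarrow> D1 v S \<Longrightarrow> D1 (\<lambda>x. u x + v x) S"
  by (simp add: D1_def differentiable_add)
lemma D1_diff: "D1 u S \<Longrightarrow> D1 v S \<Longrightarrow> D1 (\<lambda>x. u x - v x) S"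
  by (simp add: D1_def)
lemma D1_mult: "D1 u S \<Longrightarrow> D1 v S \<Longrightarrow> D1 (\<lambda>x. u x * v x) S"
  by (simp add: D1_def)
lemma D1_div: "D1 u S \<Longrightarrow> D1 v S \<Longrightarrow> (\<forall>x\<in>S. v x \<noteq> 0) \<Longrightarrow> D1 (\<lambda>x. u x / v x) S"
  by (simp add: D1_def)
lemma D1_cmult: "D1 u S \<Longrightarrow> D1 (\<lambda>x. c * u x) S"
  by (simp add: D1_def)

lemma diff_affine:
  fixes u :: "real \<Rightarrow> real"
  assumes "u differentiable (at (c*x+d))"
  shows "(\<lambda>x. u (c*x+d)) differentiable (at x)"
proof -
  have "(\<lambda>x. c*x+d) differentiable (at x)" by (auto intro!: derivative_intros)
  then show ?thesis using differentiable_chain_at[of "\<lambda>x. c*x+d" x u] assms by (simp add: o_def)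
qed

lemma deriv_affine:
  fixes u :: "real \<Rightarrow> real"
  assumes "u differentiable (at (c*x+d))"
  shows "deriv (\<lambda>x. u (c*x+d)) x = c * deriv u (c*x+d)"
proof -
  have "DERIV u (c*x+d) :> deriv u (c*x+d)" using assms by (rule iffD2[OF DERIV_deriv_iff_real_differentiable])
  then have "((\<lambda>x. u (c*x+d)) has_real_derivative (deriv u (c*x+d) * c)) (at x)"
    by (rule DERIV_chain2) (auto intro!: derivative_eq_intros)
  then show ?thesis by (simp add: DERIV_imp_deriv mult.commute)
qed

lemma D1_affine: "D1 u S \<Longrightarrow> (\<forall>x\<in>S'. c*x+d \<in> S) \<Longrightarrow> D1 (\<lambda>x. u (c*x+d)) S'"
  by (simp add: D1_def diff_affine)

lemma DERIV_transform_iff: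
  fixes u v :: "real \<Rightarrow> real"
  assumes "open S" "x \<in> S" "\<forall>z\<in>S. v z = u z"
  shows "DERIV v x :> D \<longleftrightarrow> DERIV u x :> D"
  using assms has_field_derivative_transform_within_open by metis

lemma deriv_transform:
  fixes u v :: "real \<Rightarrow> real"
  assumes "open S" "x \<in> S" "\<forall>z\<in>S. v z = u z"
  shows "deriv v x = deriv u x"
  unfolding deriv_def using DERIV_transform_iff[OF assms] by simp

lemma diff_transform:
  fixes u v :: "real \<Rightarrow> real"
  assumes "open S" "x \<in> S" "\<forall>z\<in>S. v z = u z"
  shows "v differentiable (at x) \<longleftrightarrow> u differentiable (at x)"
  unfolding real_differentiable_def using DERIV_transform_iff[OF assms] by simp

lemma D1_transform: "open S \<Longrightarrow> D1 u S \<Longrightarrow> (\<forall>x\<in>S. v x = u x) \<Longrightarrow> D1 v S"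
  unfolding D1_def using diff_transform by blast

lemma T2_transform: "open S \<Longrightarrow> T2 u S \<Longrightarrow> (\<forall>x\<in>S. v x = u x) \<Longrightarrow> T2 v S"
proof -
  assume a: "open S" "T2 u S" "\<forall>x\<in>S. v x = u x"
  have "\<forall>x\<in>S. deriv v x = deriv u x" using deriv_transform a by blast
  then show ?thesis using a D1_transform unfolding T2_def by blast
qed

lemma T2_local:
  assumes "open S" "x \<in> S" "T2 u S" "\<forall>z\<in>S. v z = u z"
  shows "v differentiable (at x) \<and> deriv v differentiable (at x)"
  using T2_transform[OF assms(1,3,4)] assms(2) unfolding T2_def D1_def by blast

lemma T2_const: "T2 (\<lambda>x. c) S"
  by (simp add: T2_def D1_const)
lemma T2_id: "T2 (\<lambda>x. x) S"
  by (simp add: T2_def D1_const D1_id)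

lemma T2_add: assumes "open S" "T2 u S" "T2 v S" shows "T2 (\<lambda>x. u x + v x) S"
proof -
  have "\<forall>x\<in>S. deriv (\<lambda>x. u x + v x) x = deriv u x + deriv v x"
    using assms by (auto simp: T2_def D1_def real_diff_iff_fd intro!: deriv_add)
  then show ?thesis using assms D1_transform[OF assms(1) D1_add] by (auto simp: T2_def D1_add)
qed

lemma T2_diff: assumes "open S" "T2 u S" "T2 v S" shows "T2 (\<lambda>x. u x - v x) S"
proof -
  have "\<forall>x\<in>S. deriv (\<lambda>x. u x - v x) x = deriv u x - deriv v x"
    using assms by (auto simp: T2_def D1_def real_diff_iff_fd intro!: deriv_diff)
  then show ?thesis using assms D1_transform[OF assms(1) D1_diff] by (auto simp: T2_def D1_diff)
qed

lemma T2_mult: assumes "open S" "T2 u S" "T2 v S" shows "T2 (\<lambda>x. u x * v x) S"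
proof -
  have "\<forall>x\<in>S. deriv (\<lambda>x. u x * v x) x = u x * deriv v x + deriv u x * v x"
    using assms by (auto simp: T2_def D1_def real_diff_iff_fd intro!: deriv_mult)
  moreover have "D1 (\<lambda>x. u x * deriv v x + deriv u x * v x) S"
    using assms by (auto simp: T2_def intro!: D1_add D1_mult)
  ultimately show ?thesis using assms D1_transform[OF assms(1)] by (auto simp: T2_def D1_mult)
qed

lemma T2_cmult: assumes "open S" "T2 u S" shows "T2 (\<lambda>x. c * u x) S"
  using T2_mult[OF assms(1) T2_const assms(2)] .

lemma T2_div: assumes "open S" "T2 u S" "T2 v S" "\<forall>x\<in>S. v x \<noteq> 0" shows "T2 (\<lambda>x. u x / v x) S"
proof -
  have "\<forall>x\<in>S. deriv (\<lambda>x. u x / v x) x = (deriv u x * v x - u x * deriv v x) / (v x * v x)"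
    using assms by (auto simp: T2_def D1_def real_diff_iff_fd power2_eq_square intro!: deriv_divide)
  moreover have "D1 (\<lambda>x. (deriv u x * v x - u x * deriv v x) / (v x * v x)) S"
    using assms by (auto simp: T2_def intro!: D1_diff D1_mult D1_div)
  ultimately show ?thesis using assms D1_transform[OF assms(1)] by (auto simp: T2_def D1_div)
qed

lemma T2_affine: assumes "open S'" "T2 u S" "\<forall>x\<in>S'. c*x+d \<in> S" shows "T2 (\<lambda>x. u (c*x+d)) S'"
proof -
  have "\<forall>x\<in>S'. deriv (\<lambda>x. u (c*x+d)) x = c * deriv u (c*x+d)"
    using assms by (auto simp: T2_def D1_def intro!: deriv_affine)
  moreover have "D1 (\<lambda>x. c * deriv u (c*x+d)) S'"
    using assms by (auto simp: T2_def intro!: D1_cmult D1_affine)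
  ultimately show ?thesis using assms D1_transform[OF assms(1)] by (auto simp: T2_def intro: D1_affine)
qed

lemma SC_key:
  assumes "(t - 1/2) * p = 0"
  shows "S_fun p (t*x+(1-t)*y) * (t * C_fun p x + (1-t) * C_fun p y)
       = C_fun p (t*x+(1-t)*y) * (t * S_fun p x + (1-t) * S_fun p y)"
proof (cases "p = 0")
  case True
  then show ?thesis by (simp add: S_fun_def C_fun_def algebra_simps)
next
  case False
  then have t: "t = 1/2" using assms by simp
  define m where "m = (x+y)/2"
  define h where "h = (y-x)/2"
  have xy: "x = m - h" "y = m + h" "t*x+(1-t)*y = m" by (auto simp: m_def h_def t field_simps)
  show ?thesis
  proof (cases "p < 0")
    case True
    define k where "k = sqrt (-p)"
    have "S_fun p = (\<lambda>z. sin (k*z))" "C_fun p = (\<lambda>z. cos (k*z))"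
      using True by (auto simp: S_fun_def C_fun_def k_def)
    have "sin (k*x) = sin (k*m) * cos (k*h) - cos (k*m) * sin (k*h)"
         "sin (k*y) = sin (k*m) * cos (k*h) + cos (k*m) * sin (k*h)"
         "cos (k*x) = cos (k*m) * cos (k*h) + sin (k*m) * sin (k*h)"
         "cos (k*y) = cos (k*m) * cos (k*h) - sin (k*m) * sin (k*h)"
      unfolding xy(1,2) by (simp_all only: right_diff_distrib distrib_left sin_add sin_diff cos_add cos_diff)
    note eqs = this
    show ?thesis
      by (simp only: xy(3) \<open>S_fun p = _\<close> \<open>C_fun p = _\<close> eqs) (simp add: t algebra_simps)
  next
    case False
    then have pp: "p > 0" using \<open>p \<noteq> 0\<close> by simp
    define k where "k = sqrt p"
    have "S_fun p = (\<lambda>z. sinh (k*z))" "C_fun p = (\<lambda>z. cosh (k*z))"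
      using pp by (auto simp: S_fun_def C_fun_def k_def)
    have "sinh (k*x) = sinh (k*m) * cosh (k*h) - cosh (k*m) * sinh (k*h)"
         "sinh (k*y) = sinh (k*m) * cosh (k*h) + cosh (k*m) * sinh (k*h)"
         "cosh (k*x) = cosh (k*m) * cosh (k*h) - sinh (k*m) * sinh (k*h)"
         "cosh (k*y) = cosh (k*m) * cosh (k*h) + sinh (k*m) * sinh (k*h)"
      unfolding xy(1,2) by (simp_all only: right_diff_distrib distrib_left sinh_add sinh_diff cosh_add cosh_diff)
    note eqs = this
    show ?thesis
      by (simp only: xy(3) \<open>S_fun p = _\<close> \<open>C_fun p = _\<close> eqs) (simp add: t algebra_simps)
  qed
qed

lemma SC_deriv:
  "\<exists>S1 C1 w. w \<noteq> 0 \<and> (\<forall>x. DERIV (S_fun p) x :> S1 x \<and> DERIV (C_fun p) x :> C1 x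
      \<and> DERIV S1 x :> p * S_fun p x \<and> DERIV C1 x :> p * C_fun p x
      \<and> S_fun p x * C1 x - S1 x * C_fun p x = w)"
proof (cases "p < 0")
  case True
  define k where "k = sqrt (-p)"
  have k: "k > 0" "k*k = -p" using True by (auto simp: k_def)
  have e: "S_fun p = (\<lambda>z. sin (k*z))" "C_fun p = (\<lambda>z. cos (k*z))"
    using True by (auto simp: S_fun_def C_fun_def k_def)
  show ?thesis
    apply (rule exI[of _ "\<lambda>z. k * cos (k*z)"], rule exI[of _ "\<lambda>z. - k * sin (k*z)"], rule exI[of _ "-k"])
    using k unfolding e
    apply (auto intro!: derivative_eq_intros)
      apply (simp_all add: mult.assoc)
    proof -
      fix x
      have "- (sin (k * x) * (k * sin (k * x))) - k * (cos (k * x) * cos (k * x))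
          = - k * (cos (k * x) * cos (k * x) + sin (k * x) * sin (k * x))" by algebra
      then show "- (sin (k * x) * (k * sin (k * x))) - k * (cos (k * x) * cos (k * x)) = - k"
        by simp
    qed
next
  case False
  show ?thesis
  proof (cases "p = 0")
    case True
    have e: "S_fun p = (\<lambda>z. z)" "C_fun p = (\<lambda>z. 1)"
      using True by (auto simp: S_fun_def C_fun_def)
    show ?thesis
      apply (rule exI[of _ "\<lambda>z. 1"], rule exI[of _ "\<lambda>z. 0"], rule exI[of _ "-1"])
      unfolding e using True by (auto intro!: derivative_eq_intros)
  next
    case False
    then have pp: "p > 0" using \<open>\<not> p < 0\<close> by simp
    define k where "k = sqrt p"
    have k: "k > 0" "k*k = p" using pp by (auto simp: k_def)
    have e: "S_fun p = (\<lambda>z. sinh (k*z))" "C_fun p = (\<lambda>z. cosh (k*z))"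
      using pp by (auto simp: S_fun_def C_fun_def k_def)
    show ?thesis
      apply (rule exI[of _ "\<lambda>z. k * cosh (k*z)"], rule exI[of _ "\<lambda>z. k * sinh (k*z)"], rule exI[of _ "-k"])
      using k unfolding e
      apply (auto intro!: derivative_eq_intros)
      apply (simp_all add: mult.assoc)
    proof -
      fix x
      have "sinh (k * x) * (k * sinh (k * x)) - k * (cosh (k * x) * cosh (k * x))
          = - k * (cosh (k * x) ^ 2 - sinh (k * x) ^ 2)" by (simp add: algebra_simps power2_eq_square)
      then show "sinh (k * x) * (k * sinh (k * x)) - k * (cosh (k * x) * cosh (k * x)) = - k"
        by (simp add: cosh_square_eq)
    qed
  qed
qed

lemma ode_rep:
  fixes u :: "real \<Rightarrow> real"
  assumes "convex I"
    and d: "\<forall>x\<in>I. u differentiable (at x) \<and> deriv u differentiable (at x)"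
    and ode: "\<forall>x\<in>I. deriv (deriv u) x = p * u x"
  shows "\<exists>\<alpha> \<beta>. \<forall>x\<in>I. u x = \<alpha> * S_fun p x + \<beta> * C_fun p x"
proof -
  obtain S1 C1 w where w: "w \<noteq> 0" and SC: "\<And>x. DERIV (S_fun p) x :> S1 x \<and> DERIV (C_fun p) x :> C1 x
      \<and> DERIV S1 x :> p * S_fun p x \<and> DERIV C1 x :> p * C_fun p x
      \<and> S_fun p x * C1 x - S1 x * C_fun p x = w"
    using SC_deriv[of p] by blast
  have du: "DERIV u x :> deriv u x" "DERIV (deriv u) x :> p * u x" if "x \<in> I" for x
    using d ode that DERIV_deriv_iff_real_differentiable by force+
  have "\<exists>c. \<forall>x\<in>I. u x * C1 x - deriv u x * C_fun p x = c"
  proof (rule has_field_derivative_zero_constant[OF assms(1)])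
    fix x assume x: "x \<in> I"
    have "DERIV (\<lambda>x. u x * C1 x - deriv u x * C_fun p x) x :>
        (deriv u x * C1 x + u x * (p * C_fun p x) - (p * u x * C_fun p x + deriv u x * C1 x))"
      using du[OF x] SC[of x] by (auto intro!: derivative_eq_intros)
    then show "((\<lambda>x. u x * C1 x - deriv u x * C_fun p x) has_field_derivative 0) (at x within I)"
      by (auto intro: has_field_derivative_at_within simp: algebra_simps)
  qed
  then obtain A where A: "\<forall>x\<in>I. u x * C1 x - deriv u x * C_fun p x = A" by blast
  have "\<exists>c. \<forall>x\<in>I. u x * S1 x - deriv u x * S_fun p x = c"
  proof (rule has_field_derivative_zero_constant[OF assms(1)])
    fix x assume x: "x \<in> I"
    have "DERIV (\<lambda>x. u x * S1 x - deriv u x * S_fun p x) x :>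
        (deriv u x * S1 x + u x * (p * S_fun p x) - (p * u x * S_fun p x + deriv u x * S1 x))"
      using du[OF x] SC[of x] by (auto intro!: derivative_eq_intros)
    then show "((\<lambda>x. u x * S1 x - deriv u x * S_fun p x) has_field_derivative 0) (at x within I)"
      by (auto intro: has_field_derivative_at_within simp: algebra_simps)
  qed
  then obtain B where B: "\<forall>x\<in>I. u x * S1 x - deriv u x * S_fun p x = B" by blast
  show ?thesis
  proof (intro exI ballI)
    fix x assume x: "x \<in> I"
    have "A * S_fun p x - B * C_fun p x = u x * (S_fun p x * C1 x - S1 x * C_fun p x)"
      unfolding A[rule_format, OF x, symmetric] B[rule_format, OF x, symmetric] by (simp add: algebra_simps)
    also have "\<dots> = u x * w" using SC[of x] by simp
    finally show "u x = (A / w) * S_fun p x + (- B / w) * C_fun p x"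
      using w by (simp add: field_simps)
  qed
qed

lemma iii_to_i:
  fixes f \<phi> :: "real \<Rightarrow> real"
  assumes "convex I" "0 < t" "t < 1" "\<forall>x\<in>I. f x \<noteq> 0" "(t - 1/2) * p = 0"
    and pe: "pair_equiv_on I f (\<lambda>x. f x * \<phi> x) (S_fun p) (C_fun p)"
  shows "\<forall>x\<in>I. \<forall>y\<in>I. (t * f x + (1 - t) * f y) * \<phi> (t * x + (1 - t) * y)
              = t * f x * \<phi> x + (1 - t) * f y * \<phi> y"
proof (intro ballI)
  fix x y assume xy: "x \<in> I" "y \<in> I"
  define m where "m = t * x + (1 - t) * y"
  have m: "m \<in> I" using convexD[OF assms(1) xy, of t "1-t"] assms(2,3) by (simp add: m_def)
  obtain a b c d where abcd: "a * d \<noteq> c * b"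
    and r: "\<forall>x\<in>I. S_fun p x = a * f x + b * (f x * \<phi> x) \<and> C_fun p x = c * f x + d * (f x * \<phi> x)"
    using pe unfolding pair_equiv_on_def by blast
  define Tf where "Tf = t * f x + (1 - t) * f y"
  define Tg where "Tg = t * (f x * \<phi> x) + (1 - t) * (f y * \<phi> y)"
  have "S_fun p m * (t * C_fun p x + (1-t) * C_fun p y) - C_fun p m * (t * S_fun p x + (1-t) * S_fun p y)
      = (a * d - c * b) * (f m * Tg - (f m * \<phi> m) * Tf)"
    using r xy m unfolding Tf_def Tg_def by (simp add: algebra_simps)
  moreover have "S_fun p m * (t * C_fun p x + (1-t) * C_fun p y) - C_fun p m * (t * S_fun p x + (1-t) * S_fun p y) = 0"
    using SC_key[OF assms(5), of x y] by (simp add: m_def)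
  ultimately have "f m * Tg - (f m * \<phi> m) * Tf = 0" using abcd by simp
  then have "Tg = \<phi> m * Tf" using assms(4) m by (simp add: algebra_simps)
  then show "(t * f x + (1 - t) * f y) * \<phi> (t * x + (1 - t) * y) = t * f x * \<phi> x + (1 - t) * f y * \<phi> y"
    unfolding Tf_def Tg_def m_def by (simp add: algebra_simps)
qed

lemma dd_prod:
  fixes f \<phi> :: "real \<Rightarrow> real"
  assumes "open I" and d: "\<forall>x\<in>I. f differentiable (at x) \<and> deriv f differentiable (at x)
                 \<and> \<phi> differentiable (at x) \<and> deriv \<phi> differentiable (at x)"
  shows "\<forall>x\<in>I. (\<lambda>x. f x * \<phi> x) differentiable (at x) \<and> deriv (\<lambda>x. f x * \<phi> x) differentiable (at x)
     \<and> deriv (deriv (\<lambda>x. f x * \<phi> x)) x = deriv (deriv f) x * \<phi> x + 2 * deriv f x * deriv \<phi> x + f x * deriv (deriv \<phi>) x"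
proof
  fix x assume x: "x \<in> I"
  have e: "\<forall>z\<in>I. deriv (\<lambda>x. f x * \<phi> x) z = f z * deriv \<phi> z + deriv f z * \<phi> z"
    using d by (auto simp: real_diff_iff_fd intro!: deriv_mult)
  have "(\<lambda>x. f x * deriv \<phi> x + deriv f x * \<phi> x) differentiable (at x)"
    using d x by auto
  moreover have "deriv (\<lambda>x. f x * deriv \<phi> x + deriv f x * \<phi> x) x
      = deriv (deriv f) x * \<phi> x + 2 * deriv f x * deriv \<phi> x + f x * deriv (deriv \<phi>) x"
  proof -
    have "deriv (\<lambda>x. f x * deriv \<phi> x + deriv f x * \<phi> x) x
        = deriv (\<lambda>x. f x * deriv \<phi> x) x + deriv (\<lambda>x. deriv f x * \<phi> x) x"
      using d x by (intro deriv_add) (auto simp: real_diff_iff_fd[symmetric])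
    also have "\<dots> = (f x * deriv (deriv \<phi>) x + deriv f x * deriv \<phi> x) + (deriv f x * deriv \<phi> x + deriv (deriv f) x * \<phi> x)"
      using d x by (subst deriv_mult deriv_mult, auto simp: real_diff_iff_fd[symmetric])+
    finally show ?thesis by simp
  qed
  ultimately show "(\<lambda>x. f x * \<phi> x) differentiable (at x) \<and> deriv (\<lambda>x. f x * \<phi> x) differentiable (at x)
     \<and> deriv (deriv (\<lambda>x. f x * \<phi> x)) x = deriv (deriv f) x * \<phi> x + 2 * deriv f x * deriv \<phi> x + f x * deriv (deriv \<phi>) x"
    using d x diff_transform[OF assms(1) x e] deriv_transform[OF assms(1) x e] by auto
qed

lemma ii_to_iii:
  fixes f \<phi> :: "real \<Rightarrow> real"
  assumes "open I" "convex I" "inj_on \<phi> I" "x1 \<in> I" "x2 \<in> I" "x1 \<noteq> x2"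
    and nz: "\<forall>x\<in>I. f x \<noteq> 0"
    and d: "\<forall>x\<in>I. f differentiable (at x) \<and> deriv f differentiable (at x)
                 \<and> \<phi> differentiable (at x) \<and> deriv \<phi> differentiable (at x)"
    and o1: "\<forall>x\<in>I. 2 * deriv f x * deriv \<phi> x + f x * deriv (deriv \<phi>) x = 0"
    and o2: "\<forall>x\<in>I. deriv (deriv f) x = p * f x"
  shows "pair_equiv_on I f (\<lambda>x. f x * \<phi> x) (S_fun p) (C_fun p)"
proof -
  define g where "g = (\<lambda>x. f x * \<phi> x)"
  have dg: "\<forall>x\<in>I. g differentiable (at x) \<and> deriv g differentiable (at x) \<and> deriv (deriv g) x = p * g x"
    using dd_prod[OF assms(1) d] o1 o2 unfolding g_def by (auto simp: algebra_simps)
  obtain a1 b1 where fr: "\<forall>x\<in>I. f x = a1 * S_fun p x + b1 * C_fun p x"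
    using ode_rep[OF assms(2), of f p] d o2 by blast
  obtain a2 b2 where gr: "\<forall>x\<in>I. g x = a2 * S_fun p x + b2 * C_fun p x"
    using ode_rep[OF assms(2), of g p] dg by blast
  define D where "D = a1 * b2 - b1 * a2"
  have e1: "b2 * f x - b1 * g x = D * S_fun p x" if "x \<in> I" for x
    using fr gr that unfolding D_def by (auto simp: algebra_simps)
  have e2: "a1 * g x - a2 * f x = D * C_fun p x" if "x \<in> I" for x
    using fr gr that unfolding D_def by (auto simp: algebra_simps)
  have D: "D \<noteq> 0"
  proof
    assume D0: "D = 0"
    have h: "b2 = b1 * \<phi> x \<and> a2 = a1 * \<phi> x" if "x \<in> I" for x
    proof -
      have "f x * (b2 - b1 * \<phi> x) = 0" "f x * (a1 * \<phi> x - a2) = 0"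
        using e1[OF that] e2[OF that] D0 unfolding g_def by (auto simp: algebra_simps)
      then show ?thesis using nz that by auto
    qed
    show False
    proof (cases "a1 = 0 \<and> b1 = 0")
      case True
      then show False using fr nz assms(4) by auto
    next
      case False
      then have "\<phi> x1 = \<phi> x2" using h[OF assms(4)] h[OF assms(5)] by auto
      then show False using assms(3-6) by (auto dest: inj_onD)
    qed
  qed
  show ?thesis
    unfolding pair_equiv_on_def
  proof (intro exI conjI ballI)
    show "(b2 / D) * (a1 / D) \<noteq> (- a2 / D) * (- b1 / D)"
    proof
      assume a: "(b2 / D) * (a1 / D) = (- a2 / D) * (- b1 / D)"
      have "(b2 / D) * (a1 / D) = (b2*a1)/(D*D)" "(- a2 / D) * (- b1 / D) = (a2*b1)/(D*D)" by simp_all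
      then have "(b2*a1 - a2*b1)/(D*D) = 0" using a by (simp add: diff_divide_distrib)
      then have "b2*a1 - a2*b1 = 0" using D by simp
      then show False using D unfolding D_def by (simp add: algebra_simps)
    qed
    fix x assume x: "x \<in> I"
    show "S_fun p x = b2 / D * f x + - b1 / D * (f x * \<phi> x)"
      using e1[OF x] D unfolding g_def by (simp add: field_simps)
    show "C_fun p x = - a2 / D * f x + a1 / D * (f x * \<phi> x)"
      using e2[OF x] D unfolding g_def by (simp add: field_simps)
  qed
qed

lemma right_cont:
  fixes \<psi> f :: "real \<Rightarrow> real" and I :: "real set"
  assumes opn: "\<forall>x\<in>I. \<exists>r>0. \<forall>z. \<bar>z - x\<bar> < r \<longrightarrow> z \<in> I"
    and ivl: "\<forall>x\<in>I. \<forall>y\<in>I. \<forall>z. x \<le> z \<and> z \<le> y \<longrightarrow> z \<in> I"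
    and mono: "\<forall>x\<in>I. \<forall>y\<in>I. x < y \<longrightarrow> \<psi> x < \<psi> y"
    and nz: "\<forall>x\<in>I. f x \<noteq> 0"
    and t: "0 < t" "t < 1"
    and E: "\<forall>x\<in>I. \<forall>y\<in>I. t * f x * (\<psi> (t*x+(1-t)*y) - \<psi> x) = (1-t) * f y * (\<psi> y - \<psi> (t*x+(1-t)*y))"
    and j: "j \<in> I" and ep: "\<epsilon> > 0"
  shows "\<exists>u\<in>I. j < u \<and> \<psi> u < \<psi> j + \<epsilon>"
proof (rule ccontr)
  assume "\<not> ?thesis"
  then have H: "\<And>u. u \<in> I \<Longrightarrow> j < u \<Longrightarrow> \<psi> j + \<epsilon> \<le> \<psi> u" by force
  obtain r where r: "r > 0" "\<And>z. \<bar>z - j\<bar> < r \<Longrightarrow> z \<in> I" using opn j by blast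
  define x0 where "x0 = j - r/2"
  have x0: "x0 \<in> I" "x0 < j" using r by (auto simp: x0_def)
  define cs where "cs = (j - t*x0)/(1-t)"
  have cs: "cs > j" using t x0 unfolding cs_def by (simp add: field_simps)
  obtain d where d: "0 < d" "d < r" "d < cs - j" using field_lbound_gt_zero[of r "cs - j"] r(1) cs by auto
  define y1 where "y1 = j + d"
  have y1a: "j < y1" "y1 < cs" "\<bar>y1 - j\<bar> < r" using d unfolding y1_def by auto
  have y1: "y1 \<in> I" "j < y1" "y1 < cs" using y1a r(2)[of y1] by auto
  define c where "c = t*x0+(1-t)*y1"
  have c: "c < j" "x0 < c"
  proof -
    have "(1-t)*y1 < (1-t)*cs" using y1 t by simp
    moreover have "(1-t)*cs = j - t*x0" using t by (simp add: cs_def field_simps)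
    ultimately show "c < j" unfolding c_def by linarith
    have "x0 = t*x0+(1-t)*x0" by algebra
    also have "\<dots> < c" using x0 y1 t unfolding c_def by simp
    finally show "x0 < c" .
  qed
  have cI: "c \<in> I" using ivl[rule_format, of x0 y1 c] x0 y1 c by linarith
  define k0 where "k0 = \<psi> j - \<psi> c"
  have k0: "k0 > 0" using mono[rule_format, of c j] cI j c unfolding k0_def by linarith
  define B where "B = t * \<bar>f x0\<bar> * (\<psi> y1 - \<psi> x0) / ((1-t) * k0)"
  have bound: "\<bar>f y\<bar> \<le> B" if y: "j < y" "y \<le> y1" for y
  proof -
    have yI: "y \<in> I" using ivl[rule_format, of j y1 y] j y1 y by linarith
    define m where "m = t*x0+(1-t)*y"
    have "m - x0 = (1-t)*(y-x0)" by (simp add: m_def algebra_simps)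
    moreover have "(1-t)*(y-x0) > 0" using t x0 y by simp
    ultimately have m1: "x0 < m" by linarith
    have "c - m = (1-t)*(y1-y)" by (simp add: m_def c_def algebra_simps)
    moreover have "(1-t)*(y1-y) \<ge> 0" using t y by simp
    ultimately have m2: "m \<le> c" by linarith
    have mI: "m \<in> I" using ivl[rule_format, of x0 c m] x0 cI m1 m2 by linarith
    have e: "t * f x0 * (\<psi> m - \<psi> x0) = (1-t) * f y * (\<psi> y - \<psi> m)"
      using E x0 yI unfolding m_def by blast
    have p1: "\<psi> m - \<psi> x0 \<le> \<psi> y1 - \<psi> x0"
    proof -
      have "m \<le> y1" using m2 c y1 by simp
      then show ?thesis using mono[rule_format, of m y1] mI y1 by (cases "m = y1") auto
    qed
    have p2: "\<psi> m - \<psi> x0 > 0" using mono[rule_format, of x0 m] mI x0 m1 by linarith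
    have p3: "\<psi> y - \<psi> m \<ge> k0"
    proof -
      have "\<psi> m \<le> \<psi> c" using mono[rule_format, of m c] mI cI m2 by (cases "m = c") auto
      moreover have "\<psi> j < \<psi> y" using mono[rule_format, of j y] j yI y by linarith
      ultimately show ?thesis unfolding k0_def by simp
    qed
    have "(1-t) * \<bar>f y\<bar> * k0 \<le> (1-t) * \<bar>f y\<bar> * (\<psi> y - \<psi> m)"
      using p3 t by (simp add: mult_left_mono)
    also have "\<dots> = \<bar>(1-t) * f y * (\<psi> y - \<psi> m)\<bar>" using t p3 k0 by (simp add: abs_mult)
    also have "\<dots> = \<bar>t * f x0 * (\<psi> m - \<psi> x0)\<bar>" using e by simp
    also have "\<dots> = t * \<bar>f x0\<bar> * (\<psi> m - \<psi> x0)" using t p2 by (simp add: abs_mult)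
    also have "\<dots> \<le> t * \<bar>f x0\<bar> * (\<psi> y1 - \<psi> x0)" using p1 t by (simp add: mult_left_mono)
    finally have "(1-t) * k0 * \<bar>f y\<bar> \<le> t * \<bar>f x0\<bar> * (\<psi> y1 - \<psi> x0)" by (simp add: algebra_simps)
    then show ?thesis unfolding B_def using t k0 by (simp add: field_simps)
  qed
  have Bpos: "B > 0"
  proof -
    have "\<bar>f y1\<bar> > 0" using nz y1 by auto
    then show ?thesis using bound[of y1] y1 by simp
  qed
  define gam where "gam = t * \<bar>f j\<bar> * \<epsilon> / ((1-t) * B)"
  have gam: "gam > 0" using t nz j ep Bpos unfolding gam_def by simp
  have low: "\<psi> y - \<psi> (t*j+(1-t)*y) \<ge> gam" if y: "j < y" "y \<le> y1" for y
  proof -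
    have yI: "y \<in> I" using ivl[rule_format, of j y1 y] j y1 y by linarith
    define m where "m = t*j+(1-t)*y"
    have "m - j = (1-t)*(y-j)" by (simp add: m_def algebra_simps)
    moreover have "(1-t)*(y-j) > 0" using t y by simp
    ultimately have m1: "j < m" by linarith
    have "y - m = t*(y-j)" by (simp add: m_def algebra_simps)
    moreover have "t*(y-j) > 0" using t y by simp
    ultimately have m2: "m < y" by linarith
    have mI: "m \<in> I" using ivl[rule_format, of j y m] j yI m1 m2 by linarith
    have e: "t * f j * (\<psi> m - \<psi> j) = (1-t) * f y * (\<psi> y - \<psi> m)"
      using E j yI unfolding m_def by blast
    have q1: "\<psi> m - \<psi> j \<ge> \<epsilon>" using H[OF mI m1] by simp
    have q2: "\<psi> y - \<psi> m > 0" using mono[rule_format, of m y] mI yI m2 by linarith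
    have "t * \<bar>f j\<bar> * \<epsilon> \<le> t * \<bar>f j\<bar> * (\<psi> m - \<psi> j)" using q1 t by (simp add: mult_left_mono)
    also have "\<dots> = \<bar>t * f j * (\<psi> m - \<psi> j)\<bar>" using t q1 ep by (simp add: abs_mult)
    also have "\<dots> = \<bar>(1-t) * f y * (\<psi> y - \<psi> m)\<bar>" using e by simp
    also have "\<dots> = (1-t) * \<bar>f y\<bar> * (\<psi> y - \<psi> m)" using t q2 by (simp add: abs_mult)
    also have "\<dots> \<le> (1-t) * B * (\<psi> y - \<psi> m)" using bound[OF y] t q2 by (simp add: mult_right_mono)
    finally have "t * \<bar>f j\<bar> * \<epsilon> \<le> ((1-t) * B) * (\<psi> y - \<psi> m)" by (simp add: algebra_simps)
    then show ?thesis unfolding gam_def m_def[symmetric] using t Bpos by (simp add: field_simps)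
  qed
  define ys where "ys = (\<lambda>n::nat. j + (1-t)^n * (y1 - j))"
  have ysb: "j < ys n \<and> ys n \<le> y1" for n
  proof -
    have "(1-t)^n > 0" "(1-t)^n \<le> 1" using t by (auto intro: power_le_one)
    moreover have "(1-t)^n * (y1 - j) \<le> 1 * (y1 - j)" using y1 \<open>(1-t)^n \<le> 1\<close> by (intro mult_right_mono) auto
    moreover have "(1-t)^n * (y1 - j) > 0" using y1 \<open>(1-t)^n > 0\<close> by simp
    ultimately show ?thesis unfolding ys_def by simp
  qed
  have ysS: "t*j+(1-t)*ys n = ys (Suc n)" for n
    unfolding ys_def by (simp add: algebra_simps)
  have tel: "\<psi> y1 - \<psi> (ys n) \<ge> real n * gam" for n
  proof (induction n)
    case 0
    then show ?case by (simp add: ys_def)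
  next
    case (Suc n)
    have "\<psi> (ys n) - \<psi> (ys (Suc n)) \<ge> gam" using low[OF ysb[THEN conjunct1] ysb[THEN conjunct2], of n] ysS[of n] by simp
    then show ?case using Suc by (simp add: algebra_simps)
  qed
  obtain n where n: "\<psi> y1 - \<psi> j < real n * gam" using reals_Archimedean3[OF gam] by blast
  have ysI: "ys n \<in> I" using ivl[rule_format, of j y1 "ys n"] j y1(1) ysb[of n] by linarith
  have "\<psi> j < \<psi> (ys n)" using mono[rule_format, of j "ys n"] j ysI ysb[of n] by linarith
  then show False using tel[of n] n by simp
qed

lemma mono_cont:
  fixes \<psi> f :: "real \<Rightarrow> real" and I :: "real set"
  assumes opn: "\<forall>x\<in>I. \<exists>r>0. \<forall>z. \<bar>z - x\<bar> < r \<longrightarrow> z \<in> I"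
    and ivl: "\<forall>x\<in>I. \<forall>y\<in>I. \<forall>z. x \<le> z \<and> z \<le> y \<longrightarrow> z \<in> I"
    and mono: "\<forall>x\<in>I. \<forall>y\<in>I. x < y \<longrightarrow> \<psi> x < \<psi> y"
    and nz: "\<forall>x\<in>I. f x \<noteq> 0"
    and t: "0 < t" "t < 1"
    and E: "\<forall>x\<in>I. \<forall>y\<in>I. t * f x * (\<psi> (t*x+(1-t)*y) - \<psi> x) = (1-t) * f y * (\<psi> y - \<psi> (t*x+(1-t)*y))"
    and j: "j \<in> I"
  shows "isCont \<psi> j"
proof -
  define I' where "I' = {x. - x \<in> I}"
  define \<psi>' where "\<psi>' = (\<lambda>x. - \<psi> (- x))"
  define f' where "f' = (\<lambda>x. f (- x))"
  have opn': "\<forall>x\<in>I'. \<exists>r>0. \<forall>z. \<bar>z - x\<bar> < r \<longrightarrow> z \<in> I'"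
  proof
    fix x assume "x \<in> I'"
    then obtain r where r: "r > 0" "\<forall>z. \<bar>z - (-x)\<bar> < r \<longrightarrow> z \<in> I" using opn unfolding I'_def by auto
    show "\<exists>r>0. \<forall>z. \<bar>z - x\<bar> < r \<longrightarrow> z \<in> I'"
    proof (intro exI[of _ r] conjI allI impI)
      show "r > 0" by fact
      fix z assume z: "\<bar>z - x\<bar> < r"
      have "\<bar>(-z) - (-x)\<bar> = \<bar>z - x\<bar>" by (simp add: abs_minus_commute)
      then have "-z \<in> I" using r(2) z by simp
      then show "z \<in> I'" unfolding I'_def by simp
    qed
  qed
  have ivl': "\<forall>x\<in>I'. \<forall>y\<in>I'. \<forall>z. x \<le> z \<and> z \<le> y \<longrightarrow> z \<in> I'"
  proof (intro ballI allI impI)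
    fix x y z assume "x \<in> I'" "y \<in> I'" "x \<le> z \<and> z \<le> y"
    then show "z \<in> I'" using ivl[rule_format, of "-y" "-x" "-z"] unfolding I'_def by simp
  qed
  have mono': "\<forall>x\<in>I'. \<forall>y\<in>I'. x < y \<longrightarrow> \<psi>' x < \<psi>' y"
  proof (intro ballI impI)
    fix x y assume "x \<in> I'" "y \<in> I'" "x < y"
    then show "\<psi>' x < \<psi>' y" using mono[rule_format, of "-y" "-x"] unfolding I'_def \<psi>'_def by simp
  qed
  have nz': "\<forall>x\<in>I'. f' x \<noteq> 0" unfolding I'_def f'_def using nz by auto
  have E': "\<forall>x\<in>I'. \<forall>y\<in>I'. t * f' x * (\<psi>' (t*x+(1-t)*y) - \<psi>' x) = (1-t) * f' y * (\<psi>' y - \<psi>' (t*x+(1-t)*y))"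
  proof (intro ballI)
    fix x y assume xy: "x \<in> I'" "y \<in> I'"
    define m' where "m' = t*(-x)+(1-t)*(-y)"
    have mm: "-(t*x+(1-t)*y) = m'" unfolding m'_def by algebra
    have e: "t * f (-x) * (\<psi> m' - \<psi> (-x)) = (1-t) * f (-y) * (\<psi> (-y) - \<psi> m')"
      using E xy unfolding I'_def m'_def by blast
    have "t * f' x * (\<psi>' (t*x+(1-t)*y) - \<psi>' x) = - (t * f (-x) * (\<psi> m' - \<psi> (-x)))"
      unfolding f'_def \<psi>'_def mm by algebra
    also have "\<dots> = - ((1-t) * f (-y) * (\<psi> (-y) - \<psi> m'))" using e by simp
    also have "\<dots> = (1-t) * f' y * (\<psi>' y - \<psi>' (t*x+(1-t)*y))"
      unfolding f'_def \<psi>'_def mm by algebra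
    finally show "t * f' x * (\<psi>' (t*x+(1-t)*y) - \<psi>' x) = (1-t) * f' y * (\<psi>' y - \<psi>' (t*x+(1-t)*y))" .
  qed
  have j': "-j \<in> I'" unfolding I'_def using j by simp
  show ?thesis
    unfolding continuous_at_eps_delta
  proof (intro allI impI)
    fix e :: real assume e: "e > 0"
    obtain uR where uR: "uR \<in> I" "j < uR" "\<psi> uR < \<psi> j + e"
      using right_cont[OF opn ivl mono nz t E j e] by blast
    obtain uL' where uL': "uL' \<in> I'" "-j < uL'" "\<psi>' uL' < \<psi>' (-j) + e"
      using right_cont[OF opn' ivl' mono' nz' t E' j' e] by blast
    define uL where "uL = - uL'"
    have uL: "uL \<in> I" "uL < j" "\<psi> uL > \<psi> j - e"
      using uL' unfolding uL_def I'_def \<psi>'_def by auto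
    show "\<exists>d>0. \<forall>x'. dist x' j < d \<longrightarrow> dist (\<psi> x') (\<psi> j) < e"
    proof (intro exI[of _ "min (uR - j) (j - uL)"] conjI allI impI)
      show "min (uR - j) (j - uL) > 0" using uR uL by simp
      fix x' assume "dist x' j < min (uR - j) (j - uL)"
      then have x': "uL < x'" "x' < uR" by (auto simp: dist_real_def abs_less_iff)
      have x'I: "x' \<in> I" using ivl[rule_format, of uL uR x'] uL uR x' by linarith
      have "\<psi> uL < \<psi> x'" "\<psi> x' < \<psi> uR"
        using mono[rule_format, of uL x'] mono[rule_format, of x' uR] uL uR x' x'I by auto
      then show "dist (\<psi> x') (\<psi> j) < e" using uL uR by (auto simp: dist_real_def abs_less_iff)
    qed
  qed
qed

lemma antideriv_local:
  fixes f :: "real \<Rightarrow> real"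
  assumes "continuous_on {a..b} f"
  shows "\<forall>u. a < u \<and> u < b \<longrightarrow> DERIV (\<lambda>u. integral {a..u} f) u :> f u"
proof (intro allI impI)
  fix u assume u: "a < u \<and> u < b"
  have "((\<lambda>u. integral {a..u} f) has_real_derivative f u) (at u within {a..b})"
    using integral_has_real_derivative[OF assms, of u] u by auto
  then show "DERIV (\<lambda>u. integral {a..u} f) u :> f u"
    using at_within_Icc_at[of a u b] u by simp
qed

lemma local_rep:
  fixes f g \<phi> :: "real \<Rightarrow> real"
  assumes I: "open I" "convex I" and t: "0 < t" "t < 1"
    and cf: "continuous_on I f" and cg: "continuous_on I g"
    and eq: "\<forall>x\<in>I. \<forall>y\<in>I. \<phi> (t*x+(1-t)*y) * (t * f x + (1-t) * f y) = t * g x + (1-t) * g y"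
    and Pnz: "\<forall>x\<in>I. \<forall>y\<in>I. t * f x + (1-t) * f y \<noteq> 0"
    and m0: "m0 \<in> I"
  shows "\<exists>N P Q P1 Q1. open N \<and> m0 \<in> N \<and>
     (\<forall>m\<in>N. P m \<noteq> 0 \<and> \<phi> m = Q m / P m \<and> DERIV P m :> P1 m \<and> DERIV Q m :> Q1 m) \<and>
     ((\<forall>x\<in>I. f differentiable (at x) \<and> g differentiable (at x)) \<longrightarrow>
        (\<forall>m\<in>N. P1 differentiable (at m) \<and> Q1 differentiable (at m)))"
proof -
  obtain r where r: "r > 0" "ball m0 r \<subseteq> I" using I(1) m0 open_contains_ball by blast
  define a where "a = m0 - r/2"
  define b where "b = m0 + r/2"
  define \<eta> where "\<eta> = r/4"
  define N where "N = {m0 - r/8 <..< m0 + r/8}"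
  have abI: "{a..b} \<subseteq> I"
  proof
    fix z assume "z \<in> {a..b}"
    then have "dist m0 z < r" using r(1) by (auto simp: a_def b_def dist_real_def abs_le_iff)
    then show "z \<in> I" using r(2) by auto
  qed
  have abI': "z \<in> I" if "a < z" "z < b" for z using abI that by auto
  define Fp where "Fp = (\<lambda>u. integral {a..u} f)"
  define Gp where "Gp = (\<lambda>u. integral {a..u} g)"
  have dF: "DERIV Fp u :> f u" if "a < u" "u < b" for u
    using antideriv_local[OF continuous_on_subset[OF cf abI]] that unfolding Fp_def by blast
  have dG: "DERIV Gp u :> g u" if "a < u" "u < b" for u
    using antideriv_local[OF continuous_on_subset[OF cg abI]] that unfolding Gp_def by blast
  have pts: "a < m + c * s" "m + c * s < b" if "m \<in> N" "\<bar>s\<bar> \<le> \<eta>" "\<bar>c\<bar> \<le> 1" for m s c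
  proof -
    have "\<bar>c * s\<bar> \<le> 1 * \<eta>" unfolding abs_mult using that by (intro mult_mono) auto
    then show "a < m + c * s" "m + c * s < b" using that r(1) unfolding a_def b_def N_def \<eta>_def
      by (auto simp: abs_le_iff)
  qed
  have eta: "\<eta> > 0" using r by (simp add: \<eta>_def)
  define c1 where "c1 = t/(1-t)"
  define c2 where "c2 = (1-t)/t"
  define P where "P = (\<lambda>m. c1 * (Fp m - Fp (m + (-(1-t)) * \<eta>)) + c2 * (Fp (m + t * \<eta>) - Fp m))"
  define Q where "Q = (\<lambda>m. c1 * (Gp m - Gp (m + (-(1-t)) * \<eta>)) + c2 * (Gp (m + t * \<eta>) - Gp m))"
  define P1 where "P1 = (\<lambda>m. c1 * (f m - f (m + (-(1-t)) * \<eta>)) + c2 * (f (m + t * \<eta>) - f m))"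
  define Q1 where "Q1 = (\<lambda>m. c1 * (g m - g (m + (-(1-t)) * \<eta>)) + c2 * (g (m + t * \<eta>) - g m))"
  have tb: "\<bar>-(1-t)\<bar> \<le> 1" "\<bar>t\<bar> \<le> 1" using t by auto
  have dsh: "DERIV (\<lambda>m. H (m + d)) m :> h (m + d)" if "DERIV H (m + d) :> h (m + d)" for H h m d
    using that DERIV_shift by blast
  have dP: "DERIV P m :> P1 m" if "m \<in> N" for m
  proof -
    have "a < m + 0 * \<eta>" "m + 0 * \<eta> < b" using pts[OF that, of \<eta> 0] eta by auto
    then have a0: "DERIV Fp m :> f m" using dF by simp
    have a1: "DERIV (\<lambda>m. Fp (m + (-(1-t)) * \<eta>)) m :> f (m + (-(1-t)) * \<eta>)"
      using dsh[of Fp f m "(-(1-t)) * \<eta>"] dF[of "m + (-(1-t)) * \<eta>"] pts[OF that _ tb(1), of \<eta>] eta by auto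
    have a2: "DERIV (\<lambda>m. Fp (m + t * \<eta>)) m :> f (m + t * \<eta>)"
      using dsh[of Fp f m "t * \<eta>"] dF[of "m + t * \<eta>"] pts[OF that _ tb(2), of \<eta>] eta by auto
    show ?thesis unfolding P_def P1_def by (intro DERIV_add DERIV_cmult DERIV_diff a0 a1 a2)
  qed
  have dQ: "DERIV Q m :> Q1 m" if "m \<in> N" for m
  proof -
    have "a < m + 0 * \<eta>" "m + 0 * \<eta> < b" using pts[OF that, of \<eta> 0] eta by auto
    then have a0: "DERIV Gp m :> g m" using dG by simp
    have a1: "DERIV (\<lambda>m. Gp (m + (-(1-t)) * \<eta>)) m :> g (m + (-(1-t)) * \<eta>)"
      using dsh[of Gp g m "(-(1-t)) * \<eta>"] dG[of "m + (-(1-t)) * \<eta>"] pts[OF that _ tb(1), of \<eta>] eta by auto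
    have a2: "DERIV (\<lambda>m. Gp (m + t * \<eta>)) m :> g (m + t * \<eta>)"
      using dsh[of Gp g m "t * \<eta>"] dG[of "m + t * \<eta>"] pts[OF that _ tb(2), of \<eta>] eta by auto
    show ?thesis unfolding Q_def Q1_def by (intro DERIV_add DERIV_cmult DERIV_diff a0 a1 a2)
  qed
  have Pne: "P m \<noteq> 0" if m: "m \<in> N" for m
  proof -
    have "\<exists>z. m + (-(1-t)) * \<eta> < z \<and> z < m \<and> Fp m - Fp (m + (-(1-t)) * \<eta>) = (m - (m + (-(1-t)) * \<eta>)) * f z"
    proof (rule MVT2)
      show "m + (-(1-t)) * \<eta> < m" using t eta by (simp add: mult_less_0_iff)
      fix x assume x: "m + (-(1-t)) * \<eta> \<le> x" "x \<le> m"
      have "a < m + (-(1-t)) * \<eta>" using pts[OF m _ tb(1), of \<eta>] eta by simp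
      moreover have "m < b" using pts[OF m, of \<eta> 0] eta by simp
      ultimately show "DERIV Fp x :> f x" using dF x by simp
    qed
    then obtain z1 where z1: "m + (-(1-t)) * \<eta> < z1" "z1 < m" and z1': "Fp m - Fp (m + (-(1-t)) * \<eta>) = (m - (m + (-(1-t)) * \<eta>)) * f z1"
      by blast
    have "m - (m + (-(1-t)) * \<eta>) = (1-t) * \<eta>" by (simp add: algebra_simps)
    note z1 = z1 z1'[unfolded this]
    have "\<exists>z. m < z \<and> z < m + t * \<eta> \<and> Fp (m + t * \<eta>) - Fp m = ((m + t * \<eta>) - m) * f z"
    proof (rule MVT2)
      show "m < m + t * \<eta>" using t eta by simp
      fix x assume x: "m \<le> x" "x \<le> m + t * \<eta>"
      have "m + t * \<eta> < b" using pts[OF m _ tb(2), of \<eta>] eta by simp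
      moreover have "a < m" using pts[OF m, of \<eta> 0] eta by simp
      ultimately show "DERIV Fp x :> f x" using dF x by simp
    qed
    then obtain z2 where z2: "m < z2" "z2 < m + t * \<eta>" and z2': "Fp (m + t * \<eta>) - Fp m = ((m + t * \<eta>) - m) * f z2"
      by blast
    have "(m + t * \<eta>) - m = t * \<eta>" by simp
    note z2 = z2 z2'[unfolded this]
    have z1I: "z1 \<in> I"
      using abI' z1(1,2) pts[OF m _ tb(1), of \<eta>] pts[OF m, of \<eta> 0] eta by force
    have z2I: "z2 \<in> I"
      using abI' z2(1,2) pts[OF m _ tb(2), of \<eta>] pts[OF m, of \<eta> 0] eta by force
    have "P m = \<eta> * (t * f z1 + (1-t) * f z2)"
      unfolding P_def z1(3) z2(3) c1_def c2_def using t by (simp add: field_simps)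
    then show ?thesis using Pnz z1I z2I eta by simp
  qed
  have PQ: "\<phi> m * P m = Q m" if m: "m \<in> N" for m
  proof -
    define K where "K = (\<lambda>s. \<phi> m * (c1 * (Fp m - Fp (m + (-(1-t)) * s)) + c2 * (Fp (m + t * s) - Fp m))
                      - (c1 * (Gp m - Gp (m + (-(1-t)) * s)) + c2 * (Gp (m + t * s) - Gp m)))"
    have dK: "DERIV K s :> 0" if s: "\<bar>s\<bar> \<le> \<eta>" for s
    proof -
      define x where "x = m + (-(1-t)) * s"
      define y where "y = m + t * s"
      have xab: "a < x" "x < b" using pts[OF m s tb(1)] unfolding x_def by auto
      have yab: "a < y" "y < b" using pts[OF m s tb(2)] unfolding y_def by auto
      have ms: "a < m" "m < b" using pts[OF m, of s 0] s by auto
      have b1: "DERIV (\<lambda>s. Fp (m + (-(1-t)) * s)) s :> f x * (-(1-t))"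
        unfolding x_def by (rule DERIV_chain2[where f=Fp and g="\<lambda>s. m + (-(1-t)) * s", OF dF[OF xab[unfolded x_def]]]) (auto intro!: derivative_eq_intros)
      have b2: "DERIV (\<lambda>s. Fp (m + t * s)) s :> f y * t"
        unfolding y_def by (rule DERIV_chain2[where f=Fp and g="\<lambda>s. m + t * s", OF dF[OF yab[unfolded y_def]]]) (auto intro!: derivative_eq_intros)
      have b3: "DERIV (\<lambda>s. Gp (m + (-(1-t)) * s)) s :> g x * (-(1-t))"
        unfolding x_def by (rule DERIV_chain2[where f=Gp and g="\<lambda>s. m + (-(1-t)) * s", OF dG[OF xab[unfolded x_def]]]) (auto intro!: derivative_eq_intros)
      have b4: "DERIV (\<lambda>s. Gp (m + t * s)) s :> g y * t"
        unfolding y_def by (rule DERIV_chain2[where f=Gp and g="\<lambda>s. m + t * s", OF dG[OF yab[unfolded y_def]]]) (auto intro!: derivative_eq_intros)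
      have "DERIV K s :> \<phi> m * (c1 * (0 - f x * (-(1-t))) + c2 * (f y * t - 0))
                         - (c1 * (0 - g x * (-(1-t))) + c2 * (g y * t - 0))"
        unfolding K_def by (intro DERIV_add DERIV_cmult DERIV_diff DERIV_const b1 b2 b3 b4)
      moreover have "\<phi> m * (c1 * (0 - f x * (-(1-t))) + c2 * (f y * t - 0))
                         - (c1 * (0 - g x * (-(1-t))) + c2 * (g y * t - 0)) = 0"
      proof -
        have mxy: "t*x+(1-t)*y = m" unfolding x_def y_def by (simp add: algebra_simps)
        have "\<phi> (t*x+(1-t)*y) * (t * f x + (1-t) * f y) = t * g x + (1-t) * g y"
          using eq abI' xab yab by blast
        then have "\<phi> m * (t * f x + (1-t) * f y) = t * g x + (1-t) * g y" unfolding mxy .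
        moreover have cc: "c1 * (1-t) = t" "c2 * t = 1 - t" using t unfolding c1_def c2_def by auto
        moreover have "\<phi> m * (c1 * (0 - f x * (-(1-t))) + c2 * (f y * t - 0))
                         - (c1 * (0 - g x * (-(1-t))) + c2 * (g y * t - 0))
             = \<phi> m * ((c1 * (1-t)) * f x + (c2 * t) * f y) - ((c1 * (1-t)) * g x + (c2 * t) * g y)"
          by (simp add: algebra_simps)
        ultimately show ?thesis by simp
      qed
      ultimately show ?thesis by simp
    qed
    have "K \<eta> = K 0"
    proof (rule DERIV_isconst_end[OF eta])
      show "continuous_on {0..\<eta>} K"
      proof (intro continuous_at_imp_continuous_on ballI)
        fix x assume "x \<in> {0..\<eta>}"
        then have "\<bar>x\<bar> \<le> \<eta>" by auto
        then show "isCont K x" using dK DERIV_isCont by blast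
      qed
      fix x assume "0 < x" "x < \<eta>" then show "DERIV K x :> 0" using dK by simp
    qed
    then show ?thesis unfolding K_def P_def Q_def by simp
  qed
  show ?thesis
  proof (intro exI conjI ballI impI)
    show "open N" unfolding N_def by simp
    show "m0 \<in> N" unfolding N_def using r by simp
    fix m assume m: "m \<in> N"
    show "P m \<noteq> 0" using Pne[OF m] .
    show "\<phi> m = Q m / P m" using PQ[OF m] Pne[OF m] by (simp add: field_simps)
    show "DERIV P m :> P1 m" using dP[OF m] .
    show "DERIV Q m :> Q1 m" using dQ[OF m] .
  next
    fix m assume d: "\<forall>x\<in>I. f differentiable (at x) \<and> g differentiable (at x)" and m: "m \<in> N"
    have mI: "m \<in> I" "m + (-(1-t)) * \<eta> \<in> I" "m + t * \<eta> \<in> I"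
      using abI' pts[OF m, of \<eta> 0] pts[OF m _ tb(1), of \<eta>] pts[OF m _ tb(2), of \<eta>] eta by auto
    have sh: "(\<lambda>m. H (m + d)) differentiable (at m)" if "H differentiable (at (m + d))" for H :: "real \<Rightarrow> real" and d
      using diff_affine[of H 1 m d] that by simp
    show "P1 differentiable (at m)" unfolding P1_def
      using d mI sh by (intro derivative_intros) auto
    show "Q1 differentiable (at m)" unfolding Q1_def
      using d mI sh by (intro derivative_intros) auto
  qed
qed

lemma D1_mono: "D1 u S \<Longrightarrow> S' \<subseteq> S \<Longrightarrow> D1 u S'" by (auto simp: D1_def)
lemma T2_mono: "T2 u S \<Longrightarrow> S' \<subseteq> S \<Longrightarrow> T2 u S'" by (auto simp: T2_def D1_def)

lemma regularity:
  fixes f \<phi> :: "real \<Rightarrow> real"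
  assumes I: "open I" "convex I" and t: "0 < t" "t < 1"
    and inj: "inj_on \<phi> I" and nz: "\<forall>x\<in>I. f x \<noteq> 0" and cphi: "continuous_on I \<phi>"
    and eq: "\<forall>x\<in>I. \<forall>y\<in>I. (t * f x + (1 - t) * f y) * \<phi> (t * x + (1 - t) * y)
              = t * f x * \<phi> x + (1 - t) * f y * \<phi> y"
  shows "\<forall>x\<in>I. f differentiable (at x) \<and> deriv f differentiable (at x)
                 \<and> \<phi> differentiable (at x) \<and> deriv \<phi> differentiable (at x)"
proof -
  define g where "g = (\<lambda>x. f x * \<phi> x)"
  have mem: "t*x+(1-t)*y \<in> I" if "x \<in> I" "y \<in> I" for x y
    using convexD[OF I(2) that, of t "1-t"] t by simp
  have Pnz: "\<forall>x\<in>I. \<forall>y\<in>I. t * f x + (1-t) * f y \<noteq> 0"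
  proof (intro ballI notI)
    fix x y assume xy: "x \<in> I" "y \<in> I" and z: "t * f x + (1-t) * f y = 0"
    have "t * f x * \<phi> x + (1 - t) * f y * \<phi> y = 0" using eq[rule_format, OF xy] z by simp
    moreover have "(1-t) * f y = - (t * f x)" using z by simp
    moreover have "t * f x * (\<phi> x - \<phi> y) = t * f x * \<phi> x + (- (t * f x)) * \<phi> y" by (simp add: algebra_simps)
    moreover have "(1-t) * f y * \<phi> y = (- (t * f x)) * \<phi> y" using \<open>(1-t) * f y = - (t * f x)\<close> by simp
    ultimately have "t * f x * (\<phi> x - \<phi> y) = 0" by linarith
    then have "\<phi> x = \<phi> y" using t nz xy by simp
    then have "x = y" using inj xy by (auto dest: inj_onD)
    then have "f x = 0" using z by (simp add: algebra_simps)
    then show False using nz xy by simp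
  qed
  have eqg: "\<forall>x\<in>I. \<forall>y\<in>I. \<phi> (t*x+(1-t)*y) * (t * f x + (1-t) * f y) = t * g x + (1-t) * g y"
  proof (intro ballI)
    fix x y assume xy: "x \<in> I" "y \<in> I"
    have "\<phi> (t*x+(1-t)*y) * (t * f x + (1-t) * f y) = (t * f x + (1-t) * f y) * \<phi> (t*x+(1-t)*y)"
      by (rule mult.commute)
    also have "\<dots> = t * f x * \<phi> x + (1 - t) * f y * \<phi> y" using eq xy by blast
    also have "\<dots> = t * g x + (1-t) * g y" unfolding g_def by (simp add: mult.assoc)
    finally show "\<phi> (t*x+(1-t)*y) * (t * f x + (1-t) * f y) = t * g x + (1-t) * g y" .
  qed
  have other: "\<exists>x0\<in>I. x0 \<noteq> y0" if y0: "y0 \<in> I" for y0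
  proof -
    obtain r where r: "r > 0" "ball y0 r \<subseteq> I" using openE[OF I(1) y0] by blast
    have "y0 + r/2 \<in> ball y0 r" using r(1) by (simp add: dist_real_def)
    then have "y0 + r/2 \<in> I" using r(2) by (rule rev_subsetD)
    moreover have "y0 + r/2 \<noteq> y0" using r(1) by simp
    ultimately show ?thesis by blast
  qed
  define Ff where "Ff = (\<lambda>x0 y. (t * f x0) * (\<phi> ((1-t)*y + t*x0) - \<phi> x0) / ((1-t) * (\<phi> y - \<phi> ((1-t)*y + t*x0))))"
  have frep: "f y = Ff x0 y \<and> \<phi> y - \<phi> ((1-t)*y + t*x0) \<noteq> 0 \<and> (1-t)*y + t*x0 \<in> I"
    if "x0 \<in> I" "y \<in> I" "y \<noteq> x0" for x0 y
  proof -
    define m where "m = (1-t)*y + t*x0"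
    have mm: "m = t*x0+(1-t)*y" unfolding m_def by (rule add.commute)
    have mI: "m \<in> I" using mem[OF that(1,2)] unfolding mm .
    have "m - y = t * (x0 - y)" unfolding m_def by (simp add: algebra_simps)
    then have "m \<noteq> y" using t that(3) by auto
    then have ne: "\<phi> y - \<phi> m \<noteq> 0" using inj mI that(2) by (auto dest: inj_onD)
    have "(t * f x0 + (1 - t) * f y) * \<phi> m = t * f x0 * \<phi> x0 + (1 - t) * f y * \<phi> y"
      using eq that unfolding mm by blast
    then have "(1-t) * f y * (\<phi> y - \<phi> m) = t * f x0 * (\<phi> m - \<phi> x0)" by (simp add: algebra_simps)
    then have "f y * ((1-t) * (\<phi> y - \<phi> m)) = (t * f x0) * (\<phi> m - \<phi> x0)" by (simp add: algebra_simps)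
    moreover have "(1-t) * (\<phi> y - \<phi> m) \<noteq> 0" using ne t by simp
    ultimately have "f y = (t * f x0) * (\<phi> m - \<phi> x0) / ((1-t) * (\<phi> y - \<phi> m))"
      by (intro eq_divide_imp)
    then show ?thesis using ne mI unfolding Ff_def m_def by simp
  qed
  have Sopen: "open (I - {x0})" for x0 using I(1) by (simp add: open_Diff)
  have isc: "isCont \<phi> x" if "x \<in> I" for x using cphi I(1) that continuous_on_eq_continuous_at by blast
  have fcont: "continuous_on I f"
  proof (rule continuous_at_imp_continuous_on, rule ballI)
    fix y0 assume y0: "y0 \<in> I"
    obtain x0 where x0: "x0 \<in> I" "x0 \<noteq> y0" using other[OF y0] by blast
    have fr0: "\<phi> y0 - \<phi> ((1-t)*y0 + t*x0) \<noteq> 0" "(1-t)*y0 + t*x0 \<in> I" using frep[OF x0(1) y0] x0 by auto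
    have c1: "isCont (\<lambda>y. \<phi> ((1-t)*y + t*x0)) y0"
      by (rule isCont_o2[where f="\<lambda>y. (1-t)*y + t*x0" and g=\<phi>, OF _ isc[OF fr0(2)]]) (intro continuous_intros)
    have "isCont (Ff x0) y0" unfolding Ff_def
      using c1 isc[OF y0] fr0 t by (intro continuous_intros) auto
    moreover have "eventually (\<lambda>y. f y = Ff x0 y) (nhds y0)"
      unfolding eventually_nhds using frep[OF x0(1)] Sopen[of x0] y0 x0 by (intro exI[of _ "I - {x0}"]) auto
    ultimately show "isCont f y0" using isCont_cong by blast
  qed
  have gcont: "continuous_on I g" unfolding g_def using fcont cphi by (intro continuous_intros)
  have LR: "\<exists>N P Q P1 Q1. open N \<and> m0 \<in> N \<and>
     (\<forall>m\<in>N. P m \<noteq> 0 \<and> \<phi> m = Q m / P m \<and> DERIV P m :> P1 m \<and> DERIV Q m :> Q1 m) \<and>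
     ((\<forall>x\<in>I. f differentiable (at x) \<and> g differentiable (at x)) \<longrightarrow>
        (\<forall>m\<in>N. P1 differentiable (at m) \<and> Q1 differentiable (at m)))" if "m0 \<in> I" for m0
    using local_rep[OF I t fcont gcont eqg Pnz that] .
  have phid: "\<phi> differentiable (at m0) \<and>
     ((\<forall>x\<in>I. f differentiable (at x) \<and> g differentiable (at x)) \<longrightarrow> deriv \<phi> differentiable (at m0))"
    if m0: "m0 \<in> I" for m0
  proof -
    obtain N P Q P1 Q1 where N: "open N" "m0 \<in> N"
      and PQ: "\<forall>m\<in>N. P m \<noteq> 0 \<and> \<phi> m = Q m / P m \<and> DERIV P m :> P1 m \<and> DERIV Q m :> Q1 m"
      and D2: "(\<forall>x\<in>I. f differentiable (at x) \<and> g differentiable (at x)) \<longrightarrow>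
        (\<forall>m\<in>N. P1 differentiable (at m) \<and> Q1 differentiable (at m))"
      using LR[OF m0] by blast
    define R where "R = (\<lambda>m. (Q1 m * P m - Q m * P1 m) / (P m * P m))"
    have dphi: "DERIV \<phi> m :> R m" if m: "m \<in> N" for m
    proof -
      have "DERIV (\<lambda>m. Q m / P m) m :> R m" unfolding R_def
        using PQ m by (intro DERIV_divide) auto
      then show ?thesis using has_field_derivative_transform_within_open[OF _ N(1) m, of "\<lambda>m. Q m / P m" "R m" \<phi>] PQ
        by auto
    qed
    have "\<phi> differentiable (at m0)" using dphi[OF N(2)] real_differentiable_def by blast
    moreover have "deriv \<phi> differentiable (at m0)" if d: "\<forall>x\<in>I. f differentiable (at x) \<and> g differentiable (at x)"
    proof -
      have e: "\<forall>m\<in>N. deriv \<phi> m = R m" using dphi DERIV_imp_deriv by blast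
      have dP: "P differentiable (at m0)" "Q differentiable (at m0)"
        using PQ N(2) real_differentiable_def by blast+
      have "R differentiable (at m0)" unfolding R_def
        using D2 d N(2) dP PQ by (intro derivative_intros) auto
      then show ?thesis using diff_transform[OF N(1) N(2) e] by simp
    qed
    ultimately show ?thesis by blast
  qed
  have Ffd: "f differentiable (at y0)" if y0: "y0 \<in> I" for y0
  proof -
    obtain x0 where x0: "x0 \<in> I" "x0 \<noteq> y0" using other[OF y0] by blast
    have fr0: "\<phi> y0 - \<phi> ((1-t)*y0 + t*x0) \<noteq> 0" "(1-t)*y0 + t*x0 \<in> I" using frep[OF x0(1) y0] x0 by auto
    have c1: "(\<lambda>y. \<phi> ((1-t)*y + t*x0)) differentiable (at y0)"
      using diff_affine[of \<phi> "1-t" y0 "t*x0"] phid[OF fr0(2)] by simp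
    have "Ff x0 differentiable (at y0)" unfolding Ff_def
      using c1 phid[OF y0] fr0 t by (intro derivative_intros) auto
    moreover have "\<forall>y\<in>I - {x0}. f y = Ff x0 y" using frep[OF x0(1)] by auto
    ultimately show ?thesis using diff_transform[OF Sopen[of x0], of y0] y0 x0 by auto
  qed
  have gd: "g differentiable (at x)" if "x \<in> I" for x
    unfolding g_def using Ffd[OF that] phid[OF that] by simp
  have T2phi: "T2 \<phi> I" unfolding T2_def D1_def using phid Ffd gd by blast
  have Ffdd: "deriv f differentiable (at y0)" if y0: "y0 \<in> I" for y0
  proof -
    obtain x0 where x0: "x0 \<in> I" "x0 \<noteq> y0" using other[OF y0] by blast
    define S where "S = I - {x0}"
    have So: "open S" unfolding S_def by (rule Sopen)
    have T2S: "T2 \<phi> S" using T2_mono[OF T2phi] unfolding S_def by blast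
    have T2a: "T2 (\<lambda>y. \<phi> ((1-t)*y + t*x0)) S"
      using T2_affine[OF So T2phi] frep[OF x0(1)] unfolding S_def by blast
    have "T2 (Ff x0) S" unfolding Ff_def
      using frep[OF x0(1)] t unfolding S_def
      by (intro T2_div T2_cmult T2_diff T2_const T2a[unfolded S_def] T2S[unfolded S_def] So[unfolded S_def]) auto
    moreover have "\<forall>y\<in>S. f y = Ff x0 y" using frep[OF x0(1)] unfolding S_def by auto
    moreover have "y0 \<in> S" using y0 x0 unfolding S_def by auto
    ultimately show ?thesis using T2_local[OF So] by blast
  qed
  show ?thesis using Ffd Ffdd phid gd by blast
qed

lemma zero_deriv_open:
  fixes F :: "real \<Rightarrow> real"
  assumes "open U" "h \<in> U" "\<forall>z\<in>U. F z = 0" "DERIV F h :> D"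
  shows "D = 0"
proof -
  have "DERIV (\<lambda>z. 0) h :> 0" by simp
  then have "DERIV F h :> 0"
    using has_field_derivative_transform_within_open[of "\<lambda>z. 0" 0 h U F] assms by auto
  then show ?thesis using DERIV_unique assms(4) by blast
qed

lemma dchain:
  fixes G :: "real \<Rightarrow> real"
  assumes "DERIV G (m + c*h) :> D"
  shows "DERIV (\<lambda>h. G (m + c*h)) h :> D * c"
  by (rule DERIV_chain2[where f=G and g="\<lambda>h. m + c*h", OF assms]) (auto intro!: derivative_eq_intros)

lemma ode_derive:
  fixes f \<phi> :: "real \<Rightarrow> real"
  assumes I: "open I" "convex I" and t: "0 < t" "t < 1"
    and inj: "inj_on \<phi> I" and nz: "\<forall>x\<in>I. f x \<noteq> 0"
    and d: "\<forall>x\<in>I. f differentiable (at x) \<and> deriv f differentiable (at x)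
                 \<and> \<phi> differentiable (at x) \<and> deriv \<phi> differentiable (at x)"
    and eq: "\<forall>x\<in>I. \<forall>y\<in>I. (t * f x + (1 - t) * f y) * \<phi> (t * x + (1 - t) * y)
              = t * f x * \<phi> x + (1 - t) * f y * \<phi> y"
  shows "(\<forall>x\<in>I. 2 * deriv f x * deriv \<phi> x + f x * deriv (deriv \<phi>) x = 0) \<and>
         (\<exists>p. (t - 1/2) * p = 0 \<and> (\<forall>x\<in>I. deriv (deriv f) x = p * f x))"
proof -
  define g where "g = (\<lambda>x. f x * \<phi> x)"
  have dg: "\<forall>x\<in>I. g differentiable (at x) \<and> deriv g differentiable (at x)
     \<and> deriv (deriv g) x = deriv (deriv f) x * \<phi> x + 2 * deriv f x * deriv \<phi> x + f x * deriv (deriv \<phi>) x"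
    using dd_prod[OF I(1) d] unfolding g_def by blast
  define f1 where "f1 = deriv f"
  define f2 where "f2 = deriv (deriv f)"
  define g1 where "g1 = deriv g"
  define g2 where "g2 = deriv (deriv g)"
  have Df: "DERIV f z :> f1 z" "DERIV f1 z :> f2 z" "DERIV g z :> g1 z" "DERIV g1 z :> g2 z" if z: "z \<in> I" for z
  proof -
    have "f differentiable (at z)" "deriv f differentiable (at z)" "g differentiable (at z)" "deriv g differentiable (at z)"
      using d dg z by auto
    then show "DERIV f z :> f1 z" "DERIV f1 z :> f2 z" "DERIV g z :> g1 z" "DERIV g1 z :> g2 z"
      unfolding f1_def f2_def g1_def g2_def by (simp_all only: DERIV_deriv_iff_real_differentiable)
  qed
  have mem: "t*x+(1-t)*y \<in> I" if xy: "x \<in> I" "y \<in> I" for x y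
    using convexD[OF I(2) xy, of t "1-t"] t by simp
  define D where "D = (\<lambda>m z. f m * g z - g m * f z)"
  define D1 where "D1 = (\<lambda>m z. f m * g1 z - g m * f1 z)"
  define D2 where "D2 = (\<lambda>m z. f m * g2 z - g m * f2 z)"
  define U where "U = (\<lambda>m. {h. m + (-(1-t))*h \<in> I \<and> m + t*h \<in> I})"
  define Phi where "Phi = (\<lambda>m h. t * D m (m + (-(1-t))*h) + (1-t) * D m (m + t*h))"
  define Phi1 where "Phi1 = (\<lambda>m h. t * (D1 m (m + (-(1-t))*h) * (-(1-t))) + (1-t) * (D1 m (m + t*h) * t))"
  define Phi2 where "Phi2 = (\<lambda>m h. t * (D2 m (m + (-(1-t))*h) * (-(1-t)) * (-(1-t))) + (1-t) * (D2 m (m + t*h) * t * t))"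
  have Uopen: "open (U m)" for m
  proof -
    have "U m = (\<lambda>h. m + (-(1-t))*h) -` I \<inter> (\<lambda>h. m + t*h) -` I" unfolding U_def by auto
    moreover have "open ((\<lambda>h. m + (-(1-t))*h) -` I)" "open ((\<lambda>h. m + t*h) -` I)"
      by (intro continuous_open_vimage I(1) continuous_intros)+
    ultimately show ?thesis by auto
  qed
  have Phi0: "Phi m h = 0" if m: "m \<in> I" and h: "h \<in> U m" for m h
  proof -
    define x where "x = m + (-(1-t))*h"
    define y where "y = m + t*h"
    have xy: "x \<in> I" "y \<in> I" using h unfolding U_def x_def y_def by auto
    have mxy: "t*x+(1-t)*y = m" unfolding x_def y_def by (simp add: algebra_simps)
    have e: "(t * f x + (1 - t) * f y) * \<phi> m = t * f x * \<phi> x + (1 - t) * f y * \<phi> y"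
      using eq xy mxy by metis
    have "Phi m h = f m * (t * f x * \<phi> x + (1 - t) * f y * \<phi> y) - f m * \<phi> m * (t * f x + (1 - t) * f y)"
      unfolding Phi_def D_def g_def x_def[symmetric] y_def[symmetric] by (simp add: algebra_simps)
    also have "\<dots> = 0" unfolding e[symmetric] by (simp add: algebra_simps)
    finally show ?thesis .
  qed
  have dPhi: "DERIV (Phi m) h :> Phi1 m h" "DERIV (Phi1 m) h :> Phi2 m h" if m: "m \<in> I" and h: "h \<in> U m" for m h
  proof -
    have xy: "m + (-(1-t))*h \<in> I" "m + t*h \<in> I" using h unfolding U_def by auto
    note a1 = dchain[OF Df(1)[OF xy(1)]] dchain[OF Df(3)[OF xy(1)]] dchain[OF Df(1)[OF xy(2)]] dchain[OF Df(3)[OF xy(2)]]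
    note a2 = dchain[OF Df(2)[OF xy(1)]] dchain[OF Df(4)[OF xy(1)]] dchain[OF Df(2)[OF xy(2)]] dchain[OF Df(4)[OF xy(2)]]
    have "DERIV (\<lambda>h. t * (f m * g (m + (-(1-t))*h) - g m * f (m + (-(1-t))*h)) + (1-t) * (f m * g (m + t*h) - g m * f (m + t*h))) h :>
      t * (f m * (g1 (m + (-(1-t))*h) * (-(1-t))) - g m * (f1 (m + (-(1-t))*h) * (-(1-t)))) + (1-t) * (f m * (g1 (m + t*h) * t) - g m * (f1 (m + t*h) * t))"
      by (intro DERIV_add DERIV_cmult DERIV_diff a1)
    then show "DERIV (Phi m) h :> Phi1 m h" unfolding Phi_def Phi1_def D_def D1_def by (simp add: algebra_simps)
    have "DERIV (\<lambda>h. t * ((f m * g1 (m + (-(1-t))*h) - g m * f1 (m + (-(1-t))*h)) * (-(1-t))) + (1-t) * ((f m * g1 (m + t*h) - g m * f1 (m + t*h)) * t)) h :>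
      t * ((f m * (g2 (m + (-(1-t))*h) * (-(1-t))) - g m * (f2 (m + (-(1-t))*h) * (-(1-t)))) * (-(1-t))) + (1-t) * ((f m * (g2 (m + t*h) * t) - g m * (f2 (m + t*h) * t)) * t)"
      by (intro DERIV_add DERIV_cmult DERIV_diff DERIV_cmult_right a2)
    then show "DERIV (Phi1 m) h :> Phi2 m h" unfolding Phi1_def Phi2_def D1_def D2_def by (simp add: algebra_simps)
  qed
  have Phi2z: "Phi2 m h = 0" if m: "m \<in> I" and h: "h \<in> U m" for m h
  proof -
    have "\<forall>z\<in>U m. Phi1 m z = 0"
      using zero_deriv_open[OF Uopen _ _ dPhi(1)] Phi0 m by blast
    then show ?thesis using zero_deriv_open[OF Uopen h _ dPhi(2)[OF m h]] by blast
  qed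
  have key1: "f m * g2 m = g m * f2 m" if m: "m \<in> I" for m
  proof -
    have "0 \<in> U m" unfolding U_def using m by simp
    then have "Phi2 m 0 = 0" using Phi2z m by blast
    then have "t * (1-t) * D2 m m = 0" unfolding Phi2_def by (simp add: algebra_simps)
    then show ?thesis using t unfolding D2_def by simp
  qed
  have ode1: "\<forall>x\<in>I. 2 * deriv f x * deriv \<phi> x + f x * deriv (deriv \<phi>) x = 0"
  proof
    fix x assume x: "x \<in> I"
    have "f x * (f2 x * \<phi> x + 2 * deriv f x * deriv \<phi> x + f x * deriv (deriv \<phi>) x) = f x * \<phi> x * f2 x"
      using key1[OF x] dg x unfolding g2_def f2_def g_def by simp
    then have "f x * (2 * deriv f x * deriv \<phi> x + f x * deriv (deriv \<phi>) x) = 0" by (simp add: algebra_simps)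
    then show "2 * deriv f x * deriv \<phi> x + f x * deriv (deriv \<phi>) x = 0" using nz x by simp
  qed
  define a where "a = (\<lambda>z. f2 z / f z)"
  have fa: "f2 z = a z * f z" "g2 z = a z * g z" if z: "z \<in> I" for z
    using key1[OF z] nz z unfolding a_def by (auto simp: field_simps)
  have rel: "(1-t)^2 * a x = t^2 * a y" if xy: "x \<in> I" "y \<in> I" "x \<noteq> y" for x y
  proof -
    define m where "m = t*x+(1-t)*y"
    define h where "h = y - x"
    have mI: "m \<in> I" using mem[OF xy(1,2)] unfolding m_def .
    have xe: "m + (-(1-t))*h = x" "m + t*h = y" unfolding m_def h_def by (simp_all add: algebra_simps)
    have hU: "h \<in> U m" unfolding U_def mem_Collect_eq xe using xy by simp
    have z1: "Phi2 m h = 0" using Phi2z[OF mI hU] .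
    have z0: "Phi m h = 0" using Phi0[OF mI hU] .
    have D2a: "D2 m z = a z * D m z" if "z \<in> I" for z
      unfolding D2_def D_def using fa[OF that] by (simp add: algebra_simps)
    have Dx: "D m x \<noteq> 0"
    proof -
      have "m - x = (1-t) * (y - x)" unfolding m_def by (simp add: algebra_simps)
      then have "m \<noteq> x" using t xy(3) by auto
      then have "\<phi> x \<noteq> \<phi> m" using inj mI xy(1) by (auto dest: inj_onD)
      moreover have "D m x = f m * f x * (\<phi> x - \<phi> m)" unfolding D_def g_def by (simp add: algebra_simps)
      ultimately show ?thesis using nz mI xy(1) by simp
    qed
    have e1: "t * (1-t) * ((1-t) * a x * D m x + t * a y * D m y) = 0"
      using z1 unfolding Phi2_def xe D2a[OF xy(1)] D2a[OF xy(2)] by (simp add: algebra_simps)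
    have e2: "(1-t) * D m y = - (t * D m x)" using z0 unfolding Phi_def xe by (simp add: algebra_simps)
    have e3: "(1-t) * a x * D m x + t * a y * D m y = 0" using e1 t by simp
    have "(1-t) * ((1-t) * a x * D m x + t * a y * D m y) = ((1-t)^2 * a x - t^2 * a y) * D m x"
    proof -
      have "(1-t) * ((1-t) * a x * D m x + t * a y * D m y) = (1-t)^2 * a x * D m x + t * a y * ((1-t) * D m y)"
        by (simp add: algebra_simps power2_eq_square)
      also have "\<dots> = ((1-t)^2 * a x - t^2 * a y) * D m x" unfolding e2 by (simp add: algebra_simps power2_eq_square)
      finally show ?thesis .
    qed
    then have "((1-t)^2 * a x - t^2 * a y) * D m x = 0" using e3 by simp
    then show ?thesis using Dx by simp
  qed
  have other: "\<exists>y\<in>I. y \<noteq> x" if x: "x \<in> I" for x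
  proof -
    obtain r where r: "r > 0" "ball x r \<subseteq> I" using openE[OF I(1) x] by blast
    have "x + r/2 \<in> ball x r" using r(1) by (simp add: dist_real_def)
    then have "x + r/2 \<in> I" using r(2) by (rule rev_subsetD)
    moreover have "x + r/2 \<noteq> x" using r(1) by simp
    ultimately show ?thesis by blast
  qed
  have ode2: "\<exists>p. (t - 1/2) * p = 0 \<and> (\<forall>x\<in>I. deriv (deriv f) x = p * f x)"
  proof (cases "t = 1/2")
    case True
    show ?thesis
    proof (cases "I = {}")
      case True
      then show ?thesis by auto
    next
      case False
      then obtain x0 where x0: "x0 \<in> I" by blast
      show ?thesis
      proof (intro exI conjI ballI)
        show "(t - 1/2) * a x0 = 0" using \<open>t = 1/2\<close> by simp
        fix y assume y: "y \<in> I"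
        have "a y = a x0"
        proof (cases "y = x0")
          case False
          then show ?thesis using rel[OF x0 y] \<open>t = 1/2\<close> by (simp add: power2_eq_square)
        qed simp
        then show "deriv (deriv f) y = a x0 * f y" using fa[OF y] unfolding f2_def by simp
      qed
    qed
  next
    case False
    show ?thesis
    proof (intro exI conjI ballI)
      show "(t - 1/2) * 0 = 0" by simp
      fix x assume x: "x \<in> I"
      obtain y where y: "y \<in> I" "y \<noteq> x" using other[OF x] by blast
      have r1: "(1-t)^2 * a x = t^2 * a y" using rel[OF x y(1)] y(2) by simp
      have r2: "(1-t)^2 * a y = t^2 * a x" using rel[OF y(1) x] y(2) by simp
      have "(1-t)^2 * ((1-t)^2 * a x) = (1-t)^2 * (t^2 * a y)" using r1 by simp
      also have "\<dots> = t^2 * ((1-t)^2 * a y)" by (simp add: algebra_simps)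
      also have "\<dots> = t^2 * (t^2 * a x)" using r2 by simp
      finally have "((1-t)^4 - t^4) * a x = 0" by (simp add: algebra_simps power2_eq_square power4_eq_xxxx)
      moreover have "(1-t)^4 \<noteq> t^4"
      proof
        assume "(1-t)^4 = t^4"
        then have "1 - t = t" using power_eq_imp_eq_base[of "1-t" 4 t] t by simp
        then show False using False by simp
      qed
      ultimately have "a x = 0" by simp
      then show "deriv (deriv f) x = 0 * f x" using fa[OF x] unfolding f2_def by simp
    qed
  qed
  show ?thesis using ode1 ode2 by blast
qed

theorem theorem2p2:
  fixes I :: "real set" and \<phi> f :: "real \<Rightarrow> real" and t :: real
  assumes "open I" and "is_interval I" and "I \<noteq> {}"
    and "strict_mono_on I \<phi> \<or> strict_antimono_on I \<phi>"
    and "\<exists>x\<in>I. f x \<noteq> 0"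
    and "0 < t" and "t < 1"
  shows "((\<forall>x\<in>I. \<forall>y\<in>I.
            (t * f x + (1 - t) * f y) * \<phi> (t * x + (1 - t) * y)
              = t * f x * \<phi> x + (1 - t) * f y * \<phi> y)
         \<longleftrightarrow>
          ((\<forall>x\<in>I. f x \<noteq> 0) \<and>
           (\<forall>x\<in>I. f differentiable (at x) \<and> deriv f differentiable (at x)
                 \<and> \<phi> differentiable (at x) \<and> deriv \<phi> differentiable (at x)) \<and>
           (\<forall>x\<in>I. 2 * deriv f x * deriv \<phi> x + f x * deriv (deriv \<phi>) x = 0) \<and>
           (\<exists>p::real. (t - 1/2) * p = 0 \<and> (\<forall>x\<in>I. deriv (deriv f) x = p * f x))))
       \<and>
         ((\<forall>x\<in>I. \<forall>y\<in>I.
            (t * f x + (1 - t) * f y) * \<phi> (t * x + (1 - t) * y)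
              = t * f x * \<phi> x + (1 - t) * f y * \<phi> y)
         \<longleftrightarrow>
          ((\<forall>x\<in>I. f x \<noteq> 0) \<and>
           (\<exists>p::real. (t - 1/2) * p = 0 \<and>
              pair_equiv_on I f (\<lambda>x. f x * \<phi> x) (S_fun p) (C_fun p))))"
proof -
  note t = assms(6,7)
  have conv: "convex I" using is_interval_convex[OF assms(2)] .
  have inj: "inj_on \<phi> I"
  proof (rule inj_onI, rule ccontr)
    fix x y assume xy: "x \<in> I" "y \<in> I" "\<phi> x = \<phi> y" "x \<noteq> y"
    then consider "x < y" | "y < x" by linarith
    then show False
    proof cases
      case 1
      then show False using assms(4) xy by (auto dest: monotone_onD)
    next
      case 2
      then show False using assms(4) xy by (auto dest: monotone_onD)
    qed
  qed
  obtain x1 where x1: "x1 \<in> I" using assms(3) by blast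
  obtain x2 where x2: "x2 \<in> I" "x2 \<noteq> x1"
  proof -
    obtain r where r: "r > 0" "ball x1 r \<subseteq> I" using openE[OF assms(1) x1] by blast
    have "x1 + r/2 \<in> ball x1 r" using r(1) by (simp add: dist_real_def)
    then have "x1 + r/2 \<in> I" using r(2) by (rule rev_subsetD)
    moreover have "x1 + r/2 \<noteq> x1" using r(1) by simp
    ultimately show ?thesis using that by blast
  qed
  have opn: "\<forall>x\<in>I. \<exists>r>0. \<forall>z. \<bar>z - x\<bar> < r \<longrightarrow> z \<in> I" using assms(1) open_real by blast
  have ivl: "\<forall>x\<in>I. \<forall>y\<in>I. \<forall>z. x \<le> z \<and> z \<le> y \<longrightarrow> z \<in> I" using assms(2) is_interval_1 by blast
  have mem: "t*x+(1-t)*y \<in> I" if xy: "x \<in> I" "y \<in> I" for x y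
    using convexD[OF conv xy, of t "1-t"] t by simp
  define EQ where "EQ = (\<forall>x\<in>I. \<forall>y\<in>I.
            (t * f x + (1 - t) * f y) * \<phi> (t * x + (1 - t) * y)
              = t * f x * \<phi> x + (1 - t) * f y * \<phi> y)"
  define II where "II = ((\<forall>x\<in>I. f x \<noteq> 0) \<and>
           (\<forall>x\<in>I. f differentiable (at x) \<and> deriv f differentiable (at x)
                 \<and> \<phi> differentiable (at x) \<and> deriv \<phi> differentiable (at x)) \<and>
           (\<forall>x\<in>I. 2 * deriv f x * deriv \<phi> x + f x * deriv (deriv \<phi>) x = 0) \<and>
           (\<exists>p::real. (t - 1/2) * p = 0 \<and> (\<forall>x\<in>I. deriv (deriv f) x = p * f x)))"
  define III where "III = ((\<forall>x\<in>I. f x \<noteq> 0) \<and>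
           (\<exists>p::real. (t - 1/2) * p = 0 \<and>
              pair_equiv_on I f (\<lambda>x. f x * \<phi> x) (S_fun p) (C_fun p)))"
  have A: "II" if eq: "EQ"
  proof -
    have eq': "\<forall>x\<in>I. \<forall>y\<in>I. (t * f x + (1 - t) * f y) * \<phi> (t * x + (1 - t) * y)
              = t * f x * \<phi> x + (1 - t) * f y * \<phi> y" using eq unfolding EQ_def .
    have nz: "\<forall>x\<in>I. f x \<noteq> 0"
    proof (rule ccontr)
      assume "\<not> (\<forall>x\<in>I. f x \<noteq> 0)"
      then obtain x0 where x0: "x0 \<in> I" "f x0 = 0" by blast
      obtain x where x: "x \<in> I" "f x \<noteq> 0" using assms(5) by blast
      have "(t * f x) * \<phi> (t * x + (1 - t) * x0) = (t * f x) * \<phi> x"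
        using eq'[rule_format, OF x(1) x0(1)] x0(2) by simp
      then have "\<phi> (t * x + (1 - t) * x0) = \<phi> x" using t x by simp
      then have "t * x + (1 - t) * x0 = x" using inj mem[OF x(1) x0(1)] x(1) by (auto dest: inj_onD)
      then have "(1-t) * (x0 - x) = 0" by (simp add: algebra_simps)
      then have "x0 = x" using t by simp
      then show False using x x0 by simp
    qed
    have E: "\<forall>x\<in>I. \<forall>y\<in>I. t * f x * (\<phi> (t*x+(1-t)*y) - \<phi> x) = (1-t) * f y * (\<phi> y - \<phi> (t*x+(1-t)*y))"
    proof (intro ballI)
      fix x y assume xy: "x \<in> I" "y \<in> I"
      have "(t * f x + (1 - t) * f y) * \<phi> (t * x + (1 - t) * y) = t * f x * \<phi> x + (1 - t) * f y * \<phi> y"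
        using eq' xy by blast
      then show "t * f x * (\<phi> (t*x+(1-t)*y) - \<phi> x) = (1-t) * f y * (\<phi> y - \<phi> (t*x+(1-t)*y))"
        by (simp add: algebra_simps)
    qed
    have cphi: "continuous_on I \<phi>"
    proof (rule continuous_at_imp_continuous_on, rule ballI)
      fix j assume j: "j \<in> I"
      show "isCont \<phi> j"
      proof (cases "strict_mono_on I \<phi>")
        case True
        have mono: "\<forall>x\<in>I. \<forall>y\<in>I. x < y \<longrightarrow> \<phi> x < \<phi> y" using True by (auto dest: monotone_onD)
        show ?thesis using mono_cont[OF opn ivl mono nz t E j] .
      next
        case False
        then have sa: "strict_antimono_on I \<phi>" using assms(4) by blast
        have mono: "\<forall>x\<in>I. \<forall>y\<in>I. x < y \<longrightarrow> (\<lambda>x. - \<phi> x) x < (\<lambda>x. - \<phi> x) y"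
          using sa by (auto dest: monotone_onD)
        have E': "\<forall>x\<in>I. \<forall>y\<in>I. t * f x * ((\<lambda>x. - \<phi> x) (t*x+(1-t)*y) - (\<lambda>x. - \<phi> x) x)
            = (1-t) * f y * ((\<lambda>x. - \<phi> x) y - (\<lambda>x. - \<phi> x) (t*x+(1-t)*y))"
        proof (intro ballI)
          fix x y assume xy: "x \<in> I" "y \<in> I"
          have "t * f x * (\<phi> (t*x+(1-t)*y) - \<phi> x) = (1-t) * f y * (\<phi> y - \<phi> (t*x+(1-t)*y))"
            using E xy by blast
          then show "t * f x * ((\<lambda>x. - \<phi> x) (t*x+(1-t)*y) - (\<lambda>x. - \<phi> x) x)
            = (1-t) * f y * ((\<lambda>x. - \<phi> x) y - (\<lambda>x. - \<phi> x) (t*x+(1-t)*y))"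
            by (simp add: algebra_simps)
        qed
        have "isCont (\<lambda>x. - \<phi> x) j" using mono_cont[OF opn ivl mono nz t E' j] .
        then have "isCont (\<lambda>x. - (- \<phi> x)) j" by (rule continuous_minus)
        then show ?thesis by simp
      qed
    qed
    have d: "\<forall>x\<in>I. f differentiable (at x) \<and> deriv f differentiable (at x)
                 \<and> \<phi> differentiable (at x) \<and> deriv \<phi> differentiable (at x)"
      using regularity[OF assms(1) conv t inj nz cphi eq'] .
    show ?thesis unfolding II_def using nz d ode_derive[OF assms(1) conv t inj nz d eq'] by blast
  qed
  have B: "III" if ii: "II"
  proof -
    have nz: "\<forall>x\<in>I. f x \<noteq> 0"
      and d: "\<forall>x\<in>I. f differentiable (at x) \<and> deriv f differentiable (at x)
                 \<and> \<phi> differentiable (at x) \<and> deriv \<phi> differentiable (at x)"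
      and o1: "\<forall>x\<in>I. 2 * deriv f x * deriv \<phi> x + f x * deriv (deriv \<phi>) x = 0"
      using ii unfolding II_def by blast+
    obtain p where p: "(t - 1/2) * p = 0" "\<forall>x\<in>I. deriv (deriv f) x = p * f x"
      using ii unfolding II_def by blast
    show ?thesis unfolding III_def
      using nz p ii_to_iii[OF assms(1) conv inj x2(1) x1 x2(2) nz d o1 p(2)] by blast
  qed
  have C: "EQ" if iii: "III"
  proof -
    have nz: "\<forall>x\<in>I. f x \<noteq> 0" using iii unfolding III_def by blast
    obtain p where p: "(t - 1/2) * p = 0" "pair_equiv_on I f (\<lambda>x. f x * \<phi> x) (S_fun p) (C_fun p)"
      using iii unfolding III_def by blast
    show ?thesis unfolding EQ_def using iii_to_i[OF conv t nz p(1) p(2)] .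
  qed
  have "(EQ \<longleftrightarrow> II) \<and> (EQ \<longleftrightarrow> III)" using A B C by blast
  then show ?thesis unfolding EQ_def II_def III_def .
qed

end
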